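(* Let $\rho=(\frac12,\ldots,\frac12)\in\mathbb{R}^6$ and let $P_{\rm ext}$ be the convex hull of the vectors $e_j$ and $\rho-2e_j$ ($0\le j\le5$). Inside the affine subspace $\{\alpha\in\mathbb{R}^6:2\rho\cdot\alpha=1\}$, the bounding inequalities of $P_{\rm ext}$ are \[\alpha_r+\alpha_s\le1,\qquad 0\le r<s\le5;\] that is, $P_{\rm ext}$ is the set of $\alpha$ with $\sum_r\alpha_r=1$ satisfying these inequalities, and each is facet-defining.
   Context: $e_0,\ldots,e_5$ is the standard basis of $\mathbb{R}^6$. *)

theory Defs
  imports "HOL-Analysis.Analysis" "HOL-Library.Numeral_Type"
begin

text \<open>Vectors in R^6 are real^6, indexed by the numeral type 6 whose elements are 0,...,5
  (ordered 0 < 1 < ... < 5). The standard basis vector e_j is axis j 1.\<close>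

definition rho :: "real^6" where
  "rho = (\<chi> i. 1/2)"

definition P_ext :: "(real^6) set" where
  "P_ext = convex hull ((\<lambda>j. axis j (1::real)) ` UNIV \<union> (\<lambda>j. rho - 2 *\<^sub>R axis j 1) ` UNIV)"

end

theory Submission
  imports Defs
begin
lemma U6: "(UNIV::6 set) = {0,1,2,3,4,5}"
proof -
  have "card {0,1,2,3,4,5::6} = card (UNIV::6 set)" by simp
  then show ?thesis by (metis card_subset_eq finite subset_UNIV)
qed
lemma key:
  fixes a0 a1 a2 a3 a4 a5 c :: real
  assumes "a0+a1+a2+a3+a4+a5 = 1" "a0+a1\<le>1" "a0+a2\<le>1" "a0+a3\<le>1" "a0+a4\<le>1" "a0+a5\<le>1"
   "a1+a2\<le>1" "a1+a3\<le>1" "a1+a4\<le>1" "a1+a5\<le>1" "a2+a3\<le>1" "a2+a4\<le>1" "a2+a5\<le>1"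
   "a3+a4\<le>1" "a3+a5\<le>1" "a4+a5\<le>1"
   and c: "c = min (1/2) (min (1-a0) (min (1-a1) (min (1-a2) (min (1-a3) (min (1-a4) (1-a5))))))"
  shows "max (c-a0) 0 + max (c-a1) 0 + max (c-a2) 0 + max (c-a3) 0 + max (c-a4) 0 + max (c-a5) 0 = 4*c"
proof -
  have b: "c \<le> 1/2" "c \<le> 1-a0" "c \<le> 1-a1" "c \<le> 1-a2" "c \<le> 1-a3" "c \<le> 1-a4" "c \<le> 1-a5"
    unfolding c by (simp_all add: min_le_iff_disj)
  have "c = 1/2 \<or> c = 1-a0 \<or> c = 1-a1 \<or> c = 1-a2 \<or> c = 1-a3 \<or> c = 1-a4 \<or> c = 1-a5"
    unfolding c min_def by auto
  then show ?thesis
  proof (elim disjE)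
    assume h: "c = 1/2"
    have "max (c-a0) 0 = c-a0" using h b(2) by (intro max_absorb1) linarith
    moreover have "max (c-a1) 0 = c-a1" using h b(3) by (intro max_absorb1) linarith
    moreover have "max (c-a2) 0 = c-a2" using h b(4) by (intro max_absorb1) linarith
    moreover have "max (c-a3) 0 = c-a3" using h b(5) by (intro max_absorb1) linarith
    moreover have "max (c-a4) 0 = c-a4" using h b(6) by (intro max_absorb1) linarith
    moreover have "max (c-a5) 0 = c-a5" using h b(7) by (intro max_absorb1) linarith
    ultimately show ?thesis using h assms(1) by linarith
  next
    assume h: "c = 1-a0"
    have "max (c-a0) 0 = 0" using h b(1) by (intro max_absorb2) linarith
    moreover have "max (c-a1) 0 = c-a1" using h assms(2) by (intro max_absorb1) linarith
    moreover have "max (c-a2) 0 = c-a2" using h assms(3) by (intro max_absorb1) linarith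
    moreover have "max (c-a3) 0 = c-a3" using h assms(4) by (intro max_absorb1) linarith
    moreover have "max (c-a4) 0 = c-a4" using h assms(5) by (intro max_absorb1) linarith
    moreover have "max (c-a5) 0 = c-a5" using h assms(6) by (intro max_absorb1) linarith
    ultimately show ?thesis using h assms(1) by linarith
  next
    assume h: "c = 1-a1"
    have "max (c-a0) 0 = c-a0" using h assms(2) by (intro max_absorb1) linarith
    moreover have "max (c-a1) 0 = 0" using h b(1) by (intro max_absorb2) linarith
    moreover have "max (c-a2) 0 = c-a2" using h assms(7) by (intro max_absorb1) linarith
    moreover have "max (c-a3) 0 = c-a3" using h assms(8) by (intro max_absorb1) linarith
    moreover have "max (c-a4) 0 = c-a4" using h assms(9) by (intro max_absorb1) linarith
    moreover have "max (c-a5) 0 = c-a5" using h assms(10) by (intro max_absorb1) linarith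
    ultimately show ?thesis using h assms(1) by linarith
  next
    assume h: "c = 1-a2"
    have "max (c-a0) 0 = c-a0" using h assms(3) by (intro max_absorb1) linarith
    moreover have "max (c-a1) 0 = c-a1" using h assms(7) by (intro max_absorb1) linarith
    moreover have "max (c-a2) 0 = 0" using h b(1) by (intro max_absorb2) linarith
    moreover have "max (c-a3) 0 = c-a3" using h assms(11) by (intro max_absorb1) linarith
    moreover have "max (c-a4) 0 = c-a4" using h assms(12) by (intro max_absorb1) linarith
    moreover have "max (c-a5) 0 = c-a5" using h assms(13) by (intro max_absorb1) linarith
    ultimately show ?thesis using h assms(1) by linarith
  next
    assume h: "c = 1-a3"
    have "max (c-a0) 0 = c-a0" using h assms(4) by (intro max_absorb1) linarith
    moreover have "max (c-a1) 0 = c-a1" using h assms(8) by (intro max_absorb1) linarith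
    moreover have "max (c-a2) 0 = c-a2" using h assms(11) by (intro max_absorb1) linarith
    moreover have "max (c-a3) 0 = 0" using h b(1) by (intro max_absorb2) linarith
    moreover have "max (c-a4) 0 = c-a4" using h assms(14) by (intro max_absorb1) linarith
    moreover have "max (c-a5) 0 = c-a5" using h assms(15) by (intro max_absorb1) linarith
    ultimately show ?thesis using h assms(1) by linarith
  next
    assume h: "c = 1-a4"
    have "max (c-a0) 0 = c-a0" using h assms(5) by (intro max_absorb1) linarith
    moreover have "max (c-a1) 0 = c-a1" using h assms(9) by (intro max_absorb1) linarith
    moreover have "max (c-a2) 0 = c-a2" using h assms(12) by (intro max_absorb1) linarith
    moreover have "max (c-a3) 0 = c-a3" using h assms(14) by (intro max_absorb1) linarith
    moreover have "max (c-a4) 0 = 0" using h b(1) by (intro max_absorb2) linarith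
    moreover have "max (c-a5) 0 = c-a5" using h assms(16) by (intro max_absorb1) linarith
    ultimately show ?thesis using h assms(1) by linarith
  next
    assume h: "c = 1-a5"
    have "max (c-a0) 0 = c-a0" using h assms(6) by (intro max_absorb1) linarith
    moreover have "max (c-a1) 0 = c-a1" using h assms(10) by (intro max_absorb1) linarith
    moreover have "max (c-a2) 0 = c-a2" using h assms(13) by (intro max_absorb1) linarith
    moreover have "max (c-a3) 0 = c-a3" using h assms(15) by (intro max_absorb1) linarith
    moreover have "max (c-a4) 0 = c-a4" using h assms(16) by (intro max_absorb1) linarith
    moreover have "max (c-a5) 0 = 0" using h b(1) by (intro max_absorb2) linarith
    ultimately show ?thesis using h assms(1) by linarith
  qed
qed

lemma sum6: "sum f (UNIV::6 set) = f 0 + f 1 + f 2 + f 3 + f 4 + f 5"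
  unfolding U6 by (simp add: add.assoc)

lemma comp_e: "axis j (1::real) $ i = (if i = j then 1 else 0)" by (simp add: axis_def)
lemma rho_comp: "rho $ i = 1/2" by (simp add: rho_def)
lemma rho_inner: "rho \<bullet> x = (\<Sum>i\<in>UNIV. x$i) / 2"
  by (simp add: rho_def inner_vec_def sum_divide_distrib)
lemma rho_rho: "rho \<bullet> rho = 3/2"
  by (simp add: rho_inner rho_comp)

definition Q :: "(real^6) set" where
  "Q = {\<alpha>. 2 * (rho \<bullet> \<alpha>) = 1 \<and> (\<forall>r s::6. r < s \<longrightarrow> \<alpha> $ r + \<alpha> $ s \<le> 1)}"

lemma Q_convex: "convex Q"
proof (unfold convex_def, intro ballI allI impI)
  fix x y :: "real^6" and u v :: real
  assume xQ: "x \<in> Q" and yQ: "y \<in> Q" and uv: "0 \<le> u" "0 \<le> v" "u + v = 1"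
  have x: "2 * (rho \<bullet> x) = 1" "\<And>r s::6. r < s \<Longrightarrow> x $ r + x $ s \<le> 1"
    using xQ unfolding Q_def by auto
  have y: "2 * (rho \<bullet> y) = 1" "\<And>r s::6. r < s \<Longrightarrow> y $ r + y $ s \<le> 1"
    using yQ unfolding Q_def by auto
  have 1: "2 * (rho \<bullet> (u *\<^sub>R x + v *\<^sub>R y)) = 1"
    using x(1) y(1) uv by (simp add: inner_add_right algebra_simps)
  have 2: "(u *\<^sub>R x + v *\<^sub>R y) $ r + (u *\<^sub>R x + v *\<^sub>R y) $ s \<le> 1" if "r < s" for r s :: 6
  proof -
    have "x $ r + x $ s \<le> 1" "y $ r + y $ s \<le> 1" using x(2) y(2) that by auto
    then have "u * (x $ r + x $ s) \<le> u" "v * (y $ r + y $ s) \<le> v"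
      using uv by (simp_all add: mult_left_le)
    then show ?thesis
      using uv by (simp add: algebra_simps)
  qed
  show "u *\<^sub>R x + v *\<^sub>R y \<in> Q" unfolding Q_def using 1 2 by auto
qed

lemma e_in_Q: "axis j 1 \<in> Q"
  unfolding Q_def by (auto simp: inner_axis rho_comp comp_e)

lemma f_in_Q: "rho - 2 *\<^sub>R axis j 1 \<in> Q"
  unfolding Q_def by (auto simp: inner_diff_right inner_axis rho_comp comp_e rho_rho)

lemma P_sub_Q: "P_ext \<subseteq> Q"
  unfolding P_ext_def
  by (rule hull_minimal) (auto simp: e_in_Q f_in_Q Q_convex)

lemma conv2:
  fixes S :: "'a::real_vector set" and u w :: "'i::finite \<Rightarrow> real"
  assumes "convex S" "\<And>j. a j \<in> S" "\<And>j. b j \<in> S" "\<And>j. 0 \<le> u j" "\<And>j. 0 \<le> w j"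
    "sum u UNIV + sum w UNIV = 1"
  shows "(\<Sum>j\<in>UNIV. u j *\<^sub>R a j) + (\<Sum>j\<in>UNIV. w j *\<^sub>R b j) \<in> S"
proof -
  have "(\<Sum>k\<in>(UNIV::('i+'i) set). case_sum u w k *\<^sub>R case_sum a b k) \<in> S"
    using assms(1-5)
    by (intro convex_sum) (auto split: sum.splits simp: sum.Plus[where A=UNIV and B=UNIV, simplified] assms(6))
  then show ?thesis
    by (simp add: sum.Plus[where A=UNIV and B=UNIV, simplified] comp_def)
qed

lemma lt6: "(0::6) < 1" "(0::6) < 2" "(0::6) < 3" "(0::6) < 4" "(0::6) < 5"
  "(1::6) < 2" "(1::6) < 3" "(1::6) < 4" "(1::6) < 5" "(2::6) < 3" "(2::6) < 4" "(2::6) < 5"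
  "(3::6) < 4" "(3::6) < 5" "(4::6) < 5"
  by (simp_all add: less_bit0_def bit0.Rep_numeral bit0.Rep_0 bit0.Rep_1)

lemma Q_sub_P: "Q \<subseteq> P_ext"
proof
  fix x assume xQ: "x \<in> Q"
  have h1: "2 * (rho \<bullet> x) = 1" and h2: "\<And>r s::6. r < s \<Longrightarrow> x $ r + x $ s \<le> 1"
    using xQ unfolding Q_def by auto
  have sum1: "x$0 + x$1 + x$2 + x$3 + x$4 + x$5 = 1"
    using h1 unfolding rho_inner sum6 by simp
  note p = h2[OF lt6(1)] h2[OF lt6(2)] h2[OF lt6(3)] h2[OF lt6(4)] h2[OF lt6(5)]
    h2[OF lt6(6)] h2[OF lt6(7)] h2[OF lt6(8)] h2[OF lt6(9)] h2[OF lt6(10)]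
    h2[OF lt6(11)] h2[OF lt6(12)] h2[OF lt6(13)] h2[OF lt6(14)] h2[OF lt6(15)]
  define c where "c = min (1/2) (min (1-x$0) (min (1-x$1) (min (1-x$2) (min (1-x$3) (min (1-x$4) (1-x$5))))))"
  have k: "max (c-x$0) 0 + max (c-x$1) 0 + max (c-x$2) 0 + max (c-x$3) 0 + max (c-x$4) 0 + max (c-x$5) 0 = 4*c"
    by (rule key[OF sum1 p c_def])
  define l where "l j = max (x$j - c) 0" for j
  define m where "m j = max (c - x$j) 0 / 2" for j
  have msum: "sum m UNIV = 2*c" using k unfolding sum6 m_def by linarith
  have lm: "l j = x$j - c + 2 * m j" for j unfolding l_def m_def by simp
  have l0: "\<And>j. 0 \<le> l j" and m0: "\<And>j. 0 \<le> m j" by (simp_all add: l_def m_def)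
  have lsum: "sum l UNIV + sum m UNIV = 1"
    using sum1 msum unfolding sum6 lm by linarith
  have eq: "x = (\<Sum>j\<in>UNIV. l j *\<^sub>R axis j 1) + (\<Sum>j\<in>UNIV. m j *\<^sub>R (rho - 2 *\<^sub>R axis j 1))"
  proof (subst vec_eq_iff, intro allI)
    fix i
    have "(\<Sum>j\<in>UNIV. m j * (1/2 - 2 * (if i = j then 1 else 0))) = sum m UNIV / 2 - 2 * m i"
    proof -
      have "(\<Sum>j\<in>UNIV. m j * (1/2 - 2 * (if i = j then 1 else 0))) = (\<Sum>j\<in>UNIV. m j / 2 - (if i = j then 2 * m j else 0))"
        by (rule sum.cong) auto
      also have "\<dots> = sum m UNIV / 2 - 2 * m i"
        by (simp add: sum_subtractf sum_divide_distrib)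
      finally show ?thesis .
    qed
    then show "x $ i = ((\<Sum>j\<in>UNIV. l j *\<^sub>R axis j 1) + (\<Sum>j\<in>UNIV. m j *\<^sub>R (rho - 2 *\<^sub>R axis j 1))) $ i"
      by (simp add: comp_e rho_comp if_distrib msum lm cong: if_cong)
  qed
  have "(\<Sum>j\<in>UNIV. l j *\<^sub>R axis j 1) + (\<Sum>j\<in>UNIV. m j *\<^sub>R (rho - 2 *\<^sub>R axis j 1)) \<in> P_ext"
    unfolding P_ext_def
    by (rule conv2[OF convex_convex_hull _ _ l0 m0 lsum]) (auto intro: hull_subset[THEN subsetD])
  then show "x \<in> P_ext" using eq by simp
qed

lemma inP: "axis j 1 \<in> P_ext" "rho - 2 *\<^sub>R axis j 1 \<in> P_ext"
  unfolding P_ext_def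
  by (rule hull_subset[THEN subsetD], rule UnI1, rule rangeI)
     (rule hull_subset[THEN subsetD], rule UnI2, rule rangeI)

lemma facet:
  fixes r s :: 6
  assumes "r < s"
  shows "(P_ext \<inter> {\<alpha>. \<alpha> $ r + \<alpha> $ s = 1}) facet_of P_ext"
proof -
  define F where "F = P_ext \<inter> {\<alpha>. \<alpha> $ r + \<alpha> $ s = 1}"
  have rs: "r \<noteq> s" using assms by simp
  have cP: "convex P_ext" unfolding P_ext_def by (rule convex_convex_hull)
  have Fe: "F = P_ext \<inter> {x. (axis r 1 + axis s 1) \<bullet> x = 1}"
    unfolding F_def by (auto simp: inner_add_left inner_axis')
  have face: "F face_of P_ext"
    unfolding Fe
  proof (rule face_of_Int_supporting_hyperplane_le[OF cP])
    fix x assume "x \<in> P_ext"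
    then have "x \<in> Q" using P_sub_Q by auto
    then have "x $ r + x $ s \<le> 1" using assms unfolding Q_def by auto
    then show "(axis r 1 + axis s 1) \<bullet> x \<le> 1" by (simp add: inner_add_left inner_axis')
  qed
  have er: "axis r 1 \<in> F" and es: "axis s 1 \<in> F"
    unfolding F_def using inP rs by (auto simp: comp_e)
  have fj: "rho - 2 *\<^sub>R axis j 1 \<in> F" if "j \<noteq> r" "j \<noteq> s" for j
    unfolding F_def using inP that by (auto simp: comp_e rho_comp)
  have ne: "F \<noteq> {}" using er by auto
  define p where "p = rho - 2 *\<^sub>R axis r 1"
  have "p \<notin> F" unfolding F_def p_def using rs by (auto simp: comp_e rho_comp)
  then have neq: "F \<noteq> P_ext" using inP(2)[of r] p_def by auto
  have lt: "aff_dim F < aff_dim P_ext" by (rule face_of_aff_dim_lt[OF cP face neq])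
  define A where "A = affine hull (insert p F)"
  have affA: "affine A" unfolding A_def by simp
  have FA: "F \<subseteq> A" and pA: "p \<in> A" unfolding A_def by (auto intro: hull_subset[THEN subsetD])
  have fA: "rho - 2 *\<^sub>R axis j 1 \<in> A" for j
  proof (cases "j = r")
    case True then show ?thesis using pA p_def by simp
  next
    case False
    show ?thesis
    proof (cases "j = s")
      case True
      have "rho - 2 *\<^sub>R axis j 1 = 1 *\<^sub>R p + 2 *\<^sub>R axis r 1 + (-2) *\<^sub>R axis s 1"
        using True by (simp add: p_def vec_eq_iff comp_e rho_comp)
      moreover have "1 *\<^sub>R p + 2 *\<^sub>R axis r 1 + (-2) *\<^sub>R axis s 1 \<in> A"
        by (rule mem_affine_3[OF affA pA]) (use FA er es in auto)
      ultimately show ?thesis by simp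
    next
      case False
      then show ?thesis using fj \<open>j \<noteq> r\<close> FA by auto
    qed
  qed
  have eA: "axis j 1 \<in> A" for j
  proof -
    have "axis j 1 = 1 *\<^sub>R axis r 1 + (1/2) *\<^sub>R p + (-1/2) *\<^sub>R (rho - 2 *\<^sub>R axis j 1)"
      by (simp add: p_def vec_eq_iff comp_e rho_comp)
    moreover have "1 *\<^sub>R axis r 1 + (1/2) *\<^sub>R p + (-1/2) *\<^sub>R (rho - 2 *\<^sub>R axis j 1) \<in> A"
      by (rule mem_affine_3[OF affA _ pA fA]) (use FA er in auto)
    ultimately show ?thesis by simp
  qed
  have PA: "P_ext \<subseteq> A"
    unfolding P_ext_def
    by (rule hull_minimal) (use eA fA affA affine_imp_convex in auto)
  have "aff_dim P_ext \<le> aff_dim A" by (rule aff_dim_subset[OF PA])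
  also have "\<dots> = aff_dim (insert p F)" unfolding A_def by simp
  also have "\<dots> \<le> aff_dim F + 1" by (simp add: aff_dim_insert)
  finally have "aff_dim F = aff_dim P_ext - 1" using lt by simp
  then show ?thesis using face ne unfolding facet_of_def F_def by simp
qed

theorem proposition8p2:
  shows "P_ext = {\<alpha>. 2 * (rho \<bullet> \<alpha>) = 1 \<and> (\<forall>r s::6. r < s \<longrightarrow> \<alpha> $ r + \<alpha> $ s \<le> 1)}
     \<and> (\<forall>r s::6. r < s \<longrightarrow> (P_ext \<inter> {\<alpha>. \<alpha> $ r + \<alpha> $ s = 1}) facet_of P_ext)"
proof
  show "P_ext = {\<alpha>. 2 * (rho \<bullet> \<alpha>) = 1 \<and> (\<forall>r s::6. r < s \<longrightarrow> \<alpha> $ r + \<alpha> $ s \<le> 1)}"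
    using equalityI[OF P_sub_Q Q_sub_P] unfolding Q_def .
  show "\<forall>r s::6. r < s \<longrightarrow> (P_ext \<inter> {\<alpha>. \<alpha> $ r + \<alpha> $ s = 1}) facet_of P_ext"
    by (intro allI impI facet)
qed

end
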